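(* Let $n,k$ be positive integers with $n\ge k$. Then the Jacobi-Stirling numbers $\mathrm{JS}_n^k(z)$ and $(-1)^{n-k}\mathrm{js}_n^k(z)$ are polynomials in $z$ of degree $n-k$ with positive integer coefficients. Moreover, writing $$\mathrm{JS}_n^k(z)=a_{n,k}^{(0)}+a_{n,k}^{(1)}z+\cdots+a_{n,k}^{(n-k)}z^{n-k},\qquad (-1)^{n-k}\mathrm{js}_n^k(z)=b_{n,k}^{(0)}+b_{n,k}^{(1)}z+\cdots+b_{n,k}^{(n-k)}z^{n-k},$$ we have $$a_{n,k}^{(n-k)}=S(n,k),\quad a_{n,k}^{(0)}=U(n,k),\quad b_{n,k}^{(n-k)}=|s(n,k)|,\quad b_{n,k}^{(0)}=|u(n,k)|.$$
   Context: The Jacobi-Stirling numbers of the second kind $\mathrm{JS}_n^k(z)$ and of the first kind $\mathrm{js}_n^k(z)$ are defined for integers $n,k\ge 0$ by $\mathrm{JS}_0^0(z)=\mathrm{js}_0^0(z)=1$, $\mathrm{JS}_n^k(z)=\mathrm{js}_n^k(z)=0$ if $k\notin\{1,\dots,n\}$ (for $(n,k)\neq(0,0)$), and for $n,k\ge1$: $\mathrm{JS}_n^k(z)=\mathrm{JS}_{n-1}^{k-1}(z)+k(k+z)\mathrm{JS}_{n-1}^k(z)$ and $\mathrm{js}_n^k(z)=\mathrm{js}_{n-1}^{k-1}(z)-(n-1)(n-1+z)\mathrm{js}_{n-1}^k(z)$. Equivalently, $x^n=\sum_{k=0}^n\mathrm{JS}_n^k(z)\prod_{i=0}^{k-1}(x-i(z+i))$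 and $\prod_{i=0}^{n-1}(x-i(z+i))=\sum_{k=0}^n\mathrm{js}_n^k(z)x^k$. $S(n,k)$ and $s(n,k)$ are the Stirling numbers of the second and first kind: $x^n=\sum_k S(n,k)\prod_{i=0}^{k-1}(x-i)$ and $\prod_{i=0}^{n-1}(x-i)=\sum_k s(n,k)x^k$. $U(n,k)$ and $u(n,k)$ (central factorial numbers of even indices, $U(n,k)=T(2n,2k)$, $u(n,k)=t(2n,2k)$) are defined by $U(0,0)=u(0,0)=1$, $U(n,k)=u(n,k)=0$ if $k\notin\{1,\dots,n\}$ (for $(n,k)\ne(0,0)$), and for $n,k\ge1$: $U(n,k)=U(n-1,k-1)+k^2U(n-1,k)$, $u(n,k)=u(n-1,k-1)-(n-1)^2u(n-1,k)$. *)

theory Defs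
  imports "HOL-Computational_Algebra.Polynomial" "HOL-Combinatorics.Stirling"
begin

fun JS :: "nat \<Rightarrow> nat \<Rightarrow> int poly" where
  "JS 0 0 = 1"
| "JS 0 (Suc k) = 0"
| "JS (Suc n) 0 = 0"
| "JS (Suc n) (Suc k) = JS n k + [: int (Suc k) ^ 2, int (Suc k) :] * JS n (Suc k)"

fun js :: "nat \<Rightarrow> nat \<Rightarrow> int poly" where
  "js 0 0 = 1"
| "js 0 (Suc k) = 0"
| "js (Suc n) 0 = 0"
| "js (Suc n) (Suc k) = js n k - [: int n ^ 2, int n :] * js n (Suc k)"

fun s1 :: "nat \<Rightarrow> nat \<Rightarrow> int" where
  "s1 0 0 = 1"
| "s1 0 (Suc k) = 0"
| "s1 (Suc n) 0 = 0"
| "s1 (Suc n) (Suc k) = s1 n k - int n * s1 n (Suc k)"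

text \<open>Central factorial numbers U(n,k) = T(2n,2k) and u(n,k) = t(2n,2k).\<close>
fun U :: "nat \<Rightarrow> nat \<Rightarrow> int" where
  "U 0 0 = 1"
| "U 0 (Suc k) = 0"
| "U (Suc n) 0 = 0"
| "U (Suc n) (Suc k) = U n k + int (Suc k) ^ 2 * U n (Suc k)"

fun u :: "nat \<Rightarrow> nat \<Rightarrow> int" where
  "u 0 0 = 1"
| "u 0 (Suc k) = 0"
| "u (Suc n) 0 = 0"
| "u (Suc n) (Suc k) = u n k - int n ^ 2 * u n (Suc k)"

end

theory Submission
  imports Defs
begin

lemma coeff_lin_mult: "coeff ([:a, b:] * q) i = a * coeff q i + (if i = 0 then 0 else b * coeff q (i - 1))"
  by (cases i) (auto simp: coeff_pCons algebra_simps)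

lemma JS_zero: "n < k \<Longrightarrow> JS n k = 0"
proof (induction n arbitrary: k)
  case 0 then show ?case by (cases k) auto
next
  case (Suc n) then show ?case by (cases k) auto
qed

lemma JS_coeff: "coeff (JS (Suc n) (Suc k)) i = coeff (JS n k) i + int (Suc k)^2 * coeff (JS n (Suc k)) i
   + (if i = 0 then 0 else int (Suc k) * coeff (JS n (Suc k)) (i - 1))"
  by (simp only: JS.simps coeff_add coeff_lin_mult)

declare JS.simps(4)[simp del]

lemma JS_nonneg: "coeff (JS n k) i \<ge> 0"
proof (induction n arbitrary: k i)
  case 0 then show ?case by (cases k) (auto simp: coeff_1)
next
  case (Suc n) then show ?case
    by (cases k) (auto simp: JS_coeff intro!: add_nonneg_nonneg mult_nonneg_nonneg)
qed

lemma JS_high: "n - k < i \<Longrightarrow> coeff (JS n k) i = 0"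
proof (induction n arbitrary: k i)
  case 0 then show ?case by (cases k) (auto simp: coeff_1)
next
  case (Suc n)
  show ?case
  proof (cases k)
    case (Suc k')
    show ?thesis
    proof (cases "k' < n")
      case True
      then show ?thesis using Suc.prems Suc.IH[of k' i] Suc.IH[of "Suc k'" i] Suc.IH[of "Suc k'" "i - 1"]
        by (simp add: JS_coeff \<open>k = Suc k'\<close>)
    next
      case False
      then show ?thesis using Suc.prems Suc.IH[of k' i] JS_zero[of n "Suc k'"]
        by (simp add: JS_coeff \<open>k = Suc k'\<close>)
    qed
  qed simp
qed

lemma JS_pos: "k \<le> n \<Longrightarrow> (k = 0 \<Longrightarrow> n = 0) \<Longrightarrow> i \<le> n - k \<Longrightarrow> coeff (JS n k) i > 0"
proof (induction n arbitrary: k i)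
  case 0 then show ?case by (simp)
next
  case (Suc n)
  then obtain k' where k: "k = Suc k'" by (cases k) auto
  have nn: "\<And>j kk. coeff (JS n kk) j \<ge> 0" by (rule JS_nonneg)
  show ?case
  proof (cases "k' = n")
    case True
    then have "coeff (JS n k') i > 0" using Suc by (auto simp: k)
    then show ?thesis using nn[of "Suc k'" i] nn[of "Suc k'" "i-1"]
      by (simp add: JS_coeff k add_pos_nonneg)
  next
    case False
    show ?thesis
    proof (cases "i \<le> n - Suc k'")
      case True
      then have "coeff (JS n (Suc k')) i > 0" using Suc False by (auto simp: k)
      then show ?thesis using nn[of k' i] nn[of "Suc k'" "i-1"]
        by (simp add: JS_coeff k add_nonneg_pos add_pos_nonneg)
    next
      case False
      then have "coeff (JS n (Suc k')) (i - 1) > 0" "i \<noteq> 0" using Suc \<open>k' \<noteq> n\<close> by (auto simp: k)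
      then show ?thesis using nn[of k' i] nn[of "Suc k'" i]
        by (simp add: JS_coeff k add_nonneg_pos)
    qed
  qed
qed

lemma JS_top: "coeff (JS n k) (n - k) = int (Stirling n k)"
proof (induction n arbitrary: k)
  case 0 then show ?case by (cases k) auto
next
  case (Suc n)
  show ?case
  proof (cases k)
    case (Suc k')
    show ?thesis
    proof (cases "k' < n")
      case True
      then have "coeff (JS n (Suc k')) (n - k') = 0" by (intro JS_high) auto
      moreover have "n - k' - 1 = n - Suc k'" by simp
      ultimately show ?thesis using True Suc.IH[of k'] Suc.IH[of "Suc k'"]
        by (simp add: JS_coeff \<open>k = Suc k'\<close> algebra_simps)
    next
      case False
      then show ?thesis using Suc.IH[of k'] JS_zero[of n "Suc k'"]
        by (cases "k' = n") (auto simp add: JS_coeff \<open>k = Suc k'\<close> JS_zero)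
    qed
  qed simp
qed

lemma JS_bot: "coeff (JS n k) 0 = U n k"
proof (induction n arbitrary: k)
  case 0 then show ?case by (cases k) auto
next
  case (Suc n) then show ?case by (cases k) (auto simp: JS_coeff)
qed

lemma js_zero: "n < k \<Longrightarrow> js n k = 0"
proof (induction n arbitrary: k)
  case 0 then show ?case by (cases k) auto
next
  case (Suc n) then show ?case by (cases k) auto
qed

lemma s1_zero: "n < k \<Longrightarrow> s1 n k = 0"
proof (induction n arbitrary: k)
  case 0 then show ?case by (cases k) auto
next
  case (Suc n) then show ?case by (cases k) auto
qed

lemma u_zero: "n < k \<Longrightarrow> u n k = 0"
proof (induction n arbitrary: k)
  case 0 then show ?case by (cases k) auto
next
  case (Suc n) then show ?case by (cases k) auto
qed

definition jsp :: "nat \<Rightarrow> nat \<Rightarrow> int poly" where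
  "jsp n k = (-1) ^ (n - k) * js n k"
definition s1p :: "nat \<Rightarrow> nat \<Rightarrow> int" where
  "s1p n k = (-1) ^ (n - k) * s1 n k"
definition up :: "nat \<Rightarrow> nat \<Rightarrow> int" where
  "up n k = (-1) ^ (n - k) * u n k"

lemma sign_split: "k < n \<Longrightarrow> ((-1::'a::comm_ring_1) ^ (n - k)) = - ((-1) ^ (n - Suc k))"
proof -
  assume "k < n"
  then have "n - k = Suc (n - Suc k)" by simp
  then show ?thesis by simp
qed

lemma jsp_rec: "jsp (Suc n) (Suc k) = jsp n k + [: int n ^ 2, int n :] * jsp n (Suc k)"
proof -
  consider "k < n" | "k = n" | "n < k" by linarith
  then show ?thesis
  proof cases
    case 1 then show ?thesis unfolding jsp_def using sign_split[OF 1, where 'a="int poly"]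
      by (simp add: algebra_simps)
  next
    case 2 then show ?thesis unfolding jsp_def by (simp add: js_zero)
  next
    case 3 then show ?thesis unfolding jsp_def by (simp add: js_zero)
  qed
qed

lemma s1p_rec: "s1p (Suc n) (Suc k) = s1p n k + int n * s1p n (Suc k)"
proof -
  consider "k < n" | "k = n" | "n < k" by linarith
  then show ?thesis
  proof cases
    case 1 then show ?thesis unfolding s1p_def using sign_split[OF 1, where 'a="int"]
      by (simp add: algebra_simps)
  next
    case 2 then show ?thesis unfolding s1p_def by (simp add: s1_zero)
  next
    case 3 then show ?thesis unfolding s1p_def by (simp add: s1_zero)
  qed
qed

lemma up_rec: "up (Suc n) (Suc k) = up n k + int n ^ 2 * up n (Suc k)"
proof -
  consider "k < n" | "k = n" | "n < k" by linarith
  then show ?thesis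
  proof cases
    case 1 then show ?thesis unfolding up_def using sign_split[OF 1, where 'a="int"]
      by (simp add: algebra_simps)
  next
    case 2 then show ?thesis unfolding up_def by (simp add: u_zero)
  next
    case 3 then show ?thesis unfolding up_def by (simp add: u_zero)
  qed
qed

lemma jsp_simps [simp]: "jsp 0 0 = 1" "jsp 0 (Suc k) = 0" "jsp (Suc n) 0 = 0"
  by (simp_all add: jsp_def)
lemma s1p_simps [simp]: "s1p 0 0 = 1" "s1p 0 (Suc k) = 0" "s1p (Suc n) 0 = 0"
  by (simp_all add: s1p_def)
lemma up_simps [simp]: "up 0 0 = 1" "up 0 (Suc k) = 0" "up (Suc n) 0 = 0"
  by (simp_all add: up_def)

lemma jsp_zero: "n < k \<Longrightarrow> jsp n k = 0"
  by (simp add: jsp_def js_zero)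

lemma jsp_coeff: "coeff (jsp (Suc n) (Suc k)) i = coeff (jsp n k) i + int n^2 * coeff (jsp n (Suc k)) i
   + (if i = 0 then 0 else int n * coeff (jsp n (Suc k)) (i - 1))"
  by (simp only: jsp_rec coeff_add coeff_lin_mult)

lemma jsp_nonneg: "coeff (jsp n k) i \<ge> 0"
proof (induction n arbitrary: k i)
  case 0 then show ?case by (cases k) (auto simp: coeff_1)
next
  case (Suc n) then show ?case
    by (cases k) (auto simp: jsp_coeff intro!: add_nonneg_nonneg mult_nonneg_nonneg)
qed

lemma jsp_high: "n - k < i \<Longrightarrow> coeff (jsp n k) i = 0"
proof (induction n arbitrary: k i)
  case 0 then show ?case by (cases k) (auto simp: coeff_1)
next
  case (Suc n)
  show ?case
  proof (cases k)
    case (Suc k')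
    show ?thesis
    proof (cases "k' < n")
      case True
      then show ?thesis using Suc.prems Suc.IH[of k' i] Suc.IH[of "Suc k'" i] Suc.IH[of "Suc k'" "i - 1"]
        by (simp add: jsp_coeff \<open>k = Suc k'\<close>)
    next
      case False
      then show ?thesis using Suc.prems Suc.IH[of k' i] jsp_zero[of n "Suc k'"]
        by (simp add: jsp_coeff \<open>k = Suc k'\<close>)
    qed
  qed simp
qed

lemma jsp_pos: "k \<le> n \<Longrightarrow> (k = 0 \<Longrightarrow> n = 0) \<Longrightarrow> i \<le> n - k \<Longrightarrow> coeff (jsp n k) i > 0"
proof (induction n arbitrary: k i)
  case 0 then show ?case by (simp)
next
  case (Suc n)
  then obtain k' where k: "k = Suc k'" by (cases k) auto
  have nn: "\<And>j kk. coeff (jsp n kk) j \<ge> 0" by (rule jsp_nonneg)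
  show ?case
  proof (cases "k' = n")
    case True
    then have "coeff (jsp n k') i > 0" using Suc by (auto simp: k)
    then show ?thesis using nn[of "Suc k'" i] nn[of "Suc k'" "i-1"]
      by (simp add: jsp_coeff k add_pos_nonneg)
  next
    case False
    then have npos: "n > 0" using Suc by (auto simp: k)
    show ?thesis
    proof (cases "i \<le> n - Suc k'")
      case True
      then have "coeff (jsp n (Suc k')) i > 0" using Suc False by (auto simp: k)
      then show ?thesis using nn[of k' i] nn[of "Suc k'" "i-1"] npos
        by (simp add: jsp_coeff k add_nonneg_pos add_pos_nonneg)
    next
      case False
      then have "coeff (jsp n (Suc k')) (i - 1) > 0" "i \<noteq> 0" using Suc \<open>k' \<noteq> n\<close> by (auto simp: k)
      then show ?thesis using nn[of k' i] nn[of "Suc k'" i] npos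
        by (simp add: jsp_coeff k add_nonneg_pos)
    qed
  qed
qed

lemma jsp_top: "coeff (jsp n k) (n - k) = s1p n k"
proof (induction n arbitrary: k)
  case 0 then show ?case by (cases k) auto
next
  case (Suc n)
  show ?case
  proof (cases k)
    case (Suc k')
    show ?thesis
    proof (cases "k' < n")
      case True
      then have "coeff (jsp n (Suc k')) (n - k') = 0" by (intro jsp_high) auto
      moreover have "n - k' - 1 = n - Suc k'" by simp
      ultimately show ?thesis using True Suc.IH[of k'] Suc.IH[of "Suc k'"]
        by (simp add: jsp_coeff s1p_rec \<open>k = Suc k'\<close> algebra_simps)
    next
      case False
      then show ?thesis using Suc.IH[of k'] jsp_zero[of n "Suc k'"]
        by (cases "k' = n") (auto simp add: jsp_coeff s1p_rec \<open>k = Suc k'\<close> jsp_zero s1p_def s1_zero)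
    qed
  qed simp
qed

lemma jsp_bot: "coeff (jsp n k) 0 = up n k"
proof (induction n arbitrary: k)
  case 0 then show ?case by (cases k) auto
next
  case (Suc n) then show ?case by (cases k) (auto simp: jsp_coeff up_rec)
qed

lemma deg_from: "coeff p d \<noteq> 0 \<Longrightarrow> (\<And>i. d < i \<Longrightarrow> coeff p i = 0) \<Longrightarrow> degree p = d"
  by (meson antisym degree_le le_degree)

theorem theorem1:
  fixes n k :: nat
  assumes "1 \<le> k" and "k \<le> n"
  shows "degree (JS n k) = n - k \<and> (\<forall>i \<le> n - k. coeff (JS n k) i > 0)
       \<and> degree ((-1) ^ (n - k) * js n k) = n - k
       \<and> (\<forall>i \<le> n - k. coeff ((-1) ^ (n - k) * js n k) i > 0)
       \<and> coeff (JS n k) (n - k) = int (Stirling n k)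
       \<and> coeff (JS n k) 0 = U n k
       \<and> coeff ((-1) ^ (n - k) * js n k) (n - k) = \<bar>s1 n k\<bar>
       \<and> coeff ((-1) ^ (n - k) * js n k) 0 = \<bar>u n k\<bar>"
proof -
  have j: "(-1) ^ (n - k) * js n k = jsp n k" by (simp add: jsp_def)
  have p1: "\<forall>i \<le> n - k. coeff (JS n k) i > 0" using assms by (auto intro: JS_pos)
  have p2: "\<forall>i \<le> n - k. coeff (jsp n k) i > 0" using assms by (auto intro: jsp_pos)
  have d1: "degree (JS n k) = n - k" using p1 JS_high by (intro deg_from) auto
  have d2: "degree (jsp n k) = n - k" using p2 jsp_high by (intro deg_from) auto
  have a1: "\<bar>s1 n k\<bar> = s1p n k"
  proof -
    have "s1p n k \<ge> 0" using jsp_top[of n k] jsp_nonneg[of n k "n-k"] by simp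
    moreover have "\<bar>s1p n k\<bar> = \<bar>s1 n k\<bar>" unfolding s1p_def by (simp add: abs_mult power_abs)
    ultimately show ?thesis by simp
  qed
  have a2: "\<bar>u n k\<bar> = up n k"
  proof -
    have "up n k \<ge> 0" using jsp_bot[of n k] jsp_nonneg[of n k 0] by simp
    moreover have "\<bar>up n k\<bar> = \<bar>u n k\<bar>" unfolding up_def by (simp add: abs_mult power_abs)
    ultimately show ?thesis by simp
  qed
  show ?thesis unfolding j a1 a2
    using p1 p2 d1 d2 JS_top JS_bot jsp_top jsp_bot by simp
qed

end
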